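(* Fix $g\ge2$ and let $F=F^{[g]}$. For every real orthogonal $g\times g$ matrix $U=(u_{jk})$ and every $X=(X_1,\dots,X_g)\in\mathcal D_F$, the tuple $UX=\left(\sum_k u_{1k}X_k,\dots,\sum_k u_{gk}X_k\right)$ lies in $\mathcal D_F$. In particular, $(\pm X_1,\dots,\pm X_g)\in\mathcal D_F$ for every choice of signs.
   Context: $F^{[g]}$ is defined recursively: $F^{[2]}=(\sigma_z,\sigma_x)$ with $\sigma_z=\begin{bmatrix}1&0\\0&-1\end{bmatrix}$, $\sigma_x=\begin{bmatrix}0&1\\1&0\end{bmatrix}$, and if $F^{[g]}=(F_1,\dots,F_g)$ then $F^{[g+1]}=(F_1\otimes\sigma_z,\dots,F_g\otimes\sigma_z,I\otimes\sigma_x)$. For a self-adjoint matrix tuple $A$, $\mathcal D_A=\bigcup_n\{X\in SM_n(\mathbb C)^g: I-\sum_i A_i\otimes X_i\succeq0\}$, where $SM_n(\mathbb C)^g$ is the set of $g$-tuples of self-adjoint $n\times n$ complex matrices. *)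

theory Defs
  imports "Jordan_Normal_Form.Matrix" "Jordan_Normal_Form.Conjugate"
begin

definition kron :: "'a::times mat \<Rightarrow> 'a mat \<Rightarrow> 'a mat" where
  "kron A B = mat (dim_row A * dim_row B) (dim_col A * dim_col B)
     (\<lambda>(i,j). A $$ (i div dim_row B, j div dim_col B) * B $$ (i mod dim_row B, j mod dim_col B))"

definition sigma_z :: "complex mat" where
  "sigma_z = mat_of_rows_list 2 [[1, 0], [0, -1]]"

definition sigma_x :: "complex mat" where
  "sigma_x = mat_of_rows_list 2 [[0, 1], [1, 0]]"

text \<open>F^[g] as a list of g matrices (each of size 2^(g-1)); only meaningful for g \<ge> 2.\<close>
fun Fg :: "nat \<Rightarrow> complex mat list" where
  "Fg (Suc (Suc 0)) = [sigma_z, sigma_x]"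
| "Fg (Suc (Suc (Suc g))) =
     map (\<lambda>A. kron A sigma_z) (Fg (Suc (Suc g))) @ [kron (1\<^sub>m (2 ^ Suc g)) sigma_x]"
| "Fg _ = []"

definition self_adjoint :: "nat \<Rightarrow> complex mat \<Rightarrow> bool" where
  "self_adjoint n M \<longleftrightarrow> M \<in> carrier_mat n n \<and> (\<forall>i<n. \<forall>j<n. M $$ (i,j) = cnj (M $$ (j,i)))"

text \<open>Positive semidefinite: Hermitian and v^* M v \<ge> 0 for all v (complex order: real and nonnegative).\<close>
definition psd :: "nat \<Rightarrow> complex mat \<Rightarrow> bool" where
  "psd N M \<longleftrightarrow> self_adjoint N M \<and>
     (\<forall>v \<in> carrier_vec N. (\<Sum>i<N. \<Sum>j<N. cnj (v $ i) * M $$ (i,j) * v $ j) \<ge> 0)"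

definition pencil :: "complex mat list \<Rightarrow> complex mat list \<Rightarrow> nat \<Rightarrow> complex mat" where
  "pencil A X N = mat N N (\<lambda>(r,c). (if r = c then 1 else 0) -
      (\<Sum>i<length A. (kron (A ! i) (X ! i)) $$ (r,c)))"

text \<open>The free spectrahedron D_A: all g-tuples (g = length A) of self-adjoint n x n
  matrices (any n \<ge> 1) with I - \<Sum> A_i \<otimes> X_i \<succeq> 0. A is assumed to be a tuple of d x d matrices.\<close>
definition free_spectrahedron :: "complex mat list \<Rightarrow> complex mat list set" where
  "free_spectrahedron A = {X. \<exists>n>0. length X = length A \<and>
      (\<forall>i<length X. self_adjoint n (X ! i)) \<and>
      psd (dim_row (A ! 0) * n) (pencil A X (dim_row (A ! 0) * n))}"

definition real_orthogonal :: "nat \<Rightarrow> real mat \<Rightarrow> bool" where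
  "real_orthogonal g U \<longleftrightarrow> U \<in> carrier_mat g g \<and> transpose_mat U * U = 1\<^sub>m g"

definition orth_act :: "real mat \<Rightarrow> complex mat list \<Rightarrow> complex mat list" where
  "orth_act U X = map (\<lambda>j. mat (dim_row (X ! 0)) (dim_col (X ! 0))
      (\<lambda>rc. \<Sum>k<length X. complex_of_real (U $$ (j,k)) * (X ! k) $$ rc)) [0..<length X]"

end

theory Submission
  imports Defs
begin


definition adj :: "complex mat \<Rightarrow> complex mat" where
  "adj A = mat (dim_col A) (dim_row A) (\<lambda>(i,j). cnj (A $$ (j,i)))"

definition msum :: "nat \<Rightarrow> (nat \<Rightarrow> complex mat) \<Rightarrow> nat set \<Rightarrow> complex mat" where
  "msum d f S = mat d d (\<lambda>rc. \<Sum>j\<in>S. f j $$ rc)"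

lemma adj_carrier[simp]: "dim_row (adj A) = dim_col A" "dim_col (adj A) = dim_row A"
  by (auto simp: adj_def)

lemma adj_carrier_mat[intro]: "A \<in> carrier_mat m n \<Longrightarrow> adj A \<in> carrier_mat n m"
  by (auto simp: adj_def)

lemma index_adj[simp]: "i < dim_col A \<Longrightarrow> j < dim_row A \<Longrightarrow> adj A $$ (i,j) = cnj (A $$ (j,i))"
  by (auto simp: adj_def)

lemma adj_mult: assumes "A \<in> carrier_mat m k" "B \<in> carrier_mat k n"
  shows "adj (A * B) = adj B * adj A"
  apply (rule eq_matI)
  using assms by (auto simp: scalar_prod_def row_def col_def cnj_sum intro!: sum.cong)

lemma adj_adj[simp]: "adj (adj A) = A"
  by (rule eq_matI) auto

lemma adj_one[simp]: "adj (1\<^sub>m n) = 1\<^sub>m n"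
  by (rule eq_matI) auto

lemma adj_uminus: "adj (- A) = - adj A"
  by (rule eq_matI) auto

lemma index_msum[simp]: "i < d \<Longrightarrow> j < d \<Longrightarrow> msum d f S $$ (i,j) = (\<Sum>l\<in>S. f l $$ (i,j))"
  by (simp add: msum_def)

lemma msum_carrier[simp]: "msum d f S \<in> carrier_mat d d" "dim_row (msum d f S) = d" "dim_col (msum d f S) = d"
  by (auto simp: msum_def)

lemma mult_msum: assumes "A \<in> carrier_mat d d" "\<And>j. j \<in> S \<Longrightarrow> f j \<in> carrier_mat d d" "finite S"
  shows "A * msum d f S = msum d (\<lambda>j. A * f j) S"
proof (rule eq_matI)
  fix i j assume ij: "i < dim_row (msum d (\<lambda>j. A * f j) S)" "j < dim_col (msum d (\<lambda>j. A * f j) S)"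
  have "(A * msum d f S) $$ (i,j) = (\<Sum>x<d. A $$ (i,x) * (\<Sum>l\<in>S. f l $$ (x,j)))"
    using ij assms by (simp add: scalar_prod_def lessThan_atLeast0 del: sum.distrib)
  also have "\<dots> = (\<Sum>l\<in>S. \<Sum>x<d. A $$ (i,x) * f l $$ (x,j))"
    unfolding sum_distrib_left by (rule sum.swap)
  also have "\<dots> = msum d (\<lambda>j. A * f j) S $$ (i,j)"
  proof -
    have "\<And>l. l \<in> S \<Longrightarrow> (\<Sum>x<d. A $$ (i,x) * f l $$ (x,j)) = (A * f l) $$ (i,j)"
    proof -
      fix l assume "l \<in> S" then have "f l \<in> carrier_mat d d" using assms by auto
      then show "(\<Sum>x<d. A $$ (i,x) * f l $$ (x,j)) = (A * f l) $$ (i,j)"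
        using ij assms by (simp add: scalar_prod_def lessThan_atLeast0)
    qed
    then show ?thesis using ij by simp
  qed
  finally show "(A * msum d f S) $$ (i,j) = msum d (\<lambda>j. A * f j) S $$ (i,j)" .
qed (use assms in auto)

lemma msum_mult: assumes "A \<in> carrier_mat d d" "\<And>j. j \<in> S \<Longrightarrow> f j \<in> carrier_mat d d" "finite S"
  shows "msum d f S * A = msum d (\<lambda>j. f j * A) S"
proof (rule eq_matI)
  fix i j assume ij: "i < dim_row (msum d (\<lambda>j. f j * A) S)" "j < dim_col (msum d (\<lambda>j. f j * A) S)"
  have "(msum d f S * A) $$ (i,j) = (\<Sum>x<d. (\<Sum>l\<in>S. f l $$ (i,x)) * A $$ (x,j))"
    using ij assms by (simp add: scalar_prod_def lessThan_atLeast0 del: sum.distrib)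
  also have "\<dots> = (\<Sum>l\<in>S. \<Sum>x<d. f l $$ (i,x) * A $$ (x,j))"
    unfolding sum_distrib_right by (rule sum.swap)
  also have "\<dots> = msum d (\<lambda>j. f j * A) S $$ (i,j)"
  proof -
    have "\<And>l. l \<in> S \<Longrightarrow> (\<Sum>x<d. f l $$ (i,x) * A $$ (x,j)) = (f l * A) $$ (i,j)"
    proof -
      fix l assume "l \<in> S" then have "f l \<in> carrier_mat d d" using assms by auto
      then show "(\<Sum>x<d. f l $$ (i,x) * A $$ (x,j)) = (f l * A) $$ (i,j)"
        using ij assms by (simp add: scalar_prod_def lessThan_atLeast0)
    qed
    then show ?thesis using ij by simp
  qed
  finally show "(msum d f S * A) $$ (i,j) = msum d (\<lambda>j. f j * A) S $$ (i,j)" .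
qed (use assms in auto)

lemma sum_split_mult: "(\<Sum>l<a*b. f l) = (\<Sum>x<a. \<Sum>y<b. f (x*b+y::nat))"
proof (induction a)
  case 0 then show ?case by simp
next
  case (Suc a)
  have "(\<Sum>l<Suc a*b. f l) = (\<Sum>l<a*b. f l) + (\<Sum>l\<in>{a*b..<a*b+b}. f l)"
    by (simp add: add.commute lessThan_atLeast0 sum.atLeastLessThan_concat)
  also have "(\<Sum>l\<in>{a*b..<a*b+b}. f l) = (\<Sum>y<b. f (a*b+y))"
  proof -
    have "(\<Sum>l\<in>{a*b..<a*b+b}. f l) = sum f {0+a*b..<b+a*b}" by (simp add: add.commute)
    also have "\<dots> = (\<Sum>i\<in>{0..<b}. f(i+a*b))" by (rule sum.shift_bounds_nat_ivl)
    also have "\<dots> = (\<Sum>y<b. f (a*b+y))" by (simp add: atLeast0LessThan add.commute)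
    finally show ?thesis .
  qed
  finally show ?case using Suc by simp
qed

lemma index_kron[simp]: "i < dim_row A * dim_row B \<Longrightarrow> j < dim_col A * dim_col B \<Longrightarrow>
  kron A B $$ (i,j) = A $$ (i div dim_row B, j div dim_col B) * B $$ (i mod dim_row B, j mod dim_col B)"
  by (simp add: kron_def)

lemma kron_dim[simp]: "dim_row (kron A B) = dim_row A * dim_row B" "dim_col (kron A B) = dim_col A * dim_col B"
  by (auto simp: kron_def)

lemma kron_carrier[intro]: "A \<in> carrier_mat m1 n1 \<Longrightarrow> B \<in> carrier_mat m2 n2 \<Longrightarrow> kron A B \<in> carrier_mat (m1*m2) (n1*n2)"
  by (auto simp: kron_def)

lemma divmod_sum_aux: "y < (b::nat) \<Longrightarrow> (x*b+y) div b = x \<and> (x*b+y) mod b = y"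
  by auto

lemma kron_mult: fixes A B C D :: "complex mat" assumes A: "A \<in> carrier_mat m1 k1" and B: "B \<in> carrier_mat m2 k2"
  and C: "C \<in> carrier_mat k1 n1" and D: "D \<in> carrier_mat k2 n2"
  shows "kron A B * kron C D = kron (A*C) (B*D)"
proof (rule eq_matI)
  fix i j assume ij: "i < dim_row (kron (A*C) (B*D))" "j < dim_col (kron (A*C) (B*D))"
  then have i: "i < m1*m2" and j: "j < n1*n2" using assms by auto
  then have m2: "m2 > 0" and n2: "n2 > 0" by (cases "m2 = 0"; auto; cases "n2 = 0"; auto)+
  have i1: "i div m2 < m1" using i by (simp add: less_mult_imp_div_less)
  have j1: "j div n2 < n1" using j by (simp add: less_mult_imp_div_less)
  have i2: "i mod m2 < m2" "j mod n2 < n2" using m2 n2 by auto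
  have "(kron A B * kron C D) $$ (i,j) = (\<Sum>l<k1*k2. kron A B $$ (i,l) * kron C D $$ (l,j))"
    using i j assms by (simp add: scalar_prod_def lessThan_atLeast0 del: sum.distrib)
  also have "\<dots> = (\<Sum>x<k1. \<Sum>y<k2. kron A B $$ (i,x*k2+y) * kron C D $$ (x*k2+y,j))"
    by (rule sum_split_mult)
  also have "\<dots> = (\<Sum>x<k1. \<Sum>y<k2. (A $$ (i div m2, x) * C $$ (x, j div n2)) * (B $$ (i mod m2, y) * D $$ (y, j mod n2)))"
  proof (intro sum.cong refl)
    fix x y assume xy: "x \<in> {..<k1}" "y \<in> {..<k2}"
    then have "Suc x * k2 \<le> k1 * k2" by (intro mult_le_mono1) auto
    then have l: "x*k2+y < k1*k2" using xy by auto
    show "kron A B $$ (i,x*k2+y) * kron C D $$ (x*k2+y,j) = (A $$ (i div m2, x) * C $$ (x, j div n2)) * (B $$ (i mod m2, y) * D $$ (y, j mod n2))"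
    proof -
      have e1: "kron A B $$ (i,x*k2+y) = A $$ (i div m2, x) * B $$ (i mod m2, y)"
        using assms i j l xy divmod_sum_aux[of y k2 x] by simp
      have e2: "kron C D $$ (x*k2+y,j) = C $$ (x, j div n2) * D $$ (y, j mod n2)"
        using assms i j l xy divmod_sum_aux[of y k2 x] by simp
      show ?thesis unfolding e1 e2 by (simp only: ac_simps)
    qed
  qed
  also have "\<dots> = (A*C) $$ (i div m2, j div n2) * (B*D) $$ (i mod m2, j mod n2)"
    using assms i1 j1 i2 by (simp add: scalar_prod_def lessThan_atLeast0 sum_product del: sum.distrib)
  also have "\<dots> = kron (A*C) (B*D) $$ (i,j)"
    using assms i j by simp
  finally show "(kron A B * kron C D) $$ (i,j) = kron (A*C) (B*D) $$ (i,j)" .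
qed (use assms in auto)

lemma kron_adj: assumes A: "A \<in> carrier_mat m1 n1" and B: "B \<in> carrier_mat m2 n2"
  shows "adj (kron A B) = kron (adj A) (adj B)"
proof (rule eq_matI)
  fix i j assume ij: "i < dim_row (kron (adj A) (adj B))" "j < dim_col (kron (adj A) (adj B))"
  then have i: "i < n1*n2" and j: "j < m1*m2" using assms by auto
  then have m2: "m2 > 0" and n2: "n2 > 0" by (cases "m2 = 0"; auto; cases "n2 = 0"; auto)+
  have i1: "i div n2 < n1" using i by (simp add: less_mult_imp_div_less)
  have j1: "j div m2 < m1" using j by (simp add: less_mult_imp_div_less)
  have i2: "i mod n2 < n2" "j mod m2 < m2" using m2 n2 by auto
  show "adj (kron A B) $$ (i,j) = kron (adj A) (adj B) $$ (i,j)"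
    using assms i j i1 j1 i2 by simp
qed (use assms in auto)

lemma kron_one: "kron (1\<^sub>m m) (1\<^sub>m n) = (1\<^sub>m (m*n) :: complex mat)"
proof (rule eq_matI)
  fix i j assume ij: "i < dim_row (1\<^sub>m (m*n) :: complex mat)" "j < dim_col (1\<^sub>m (m*n) :: complex mat)"
  then have i: "i < m*n" and j: "j < m*n" by auto
  then have n: "n > 0" by (cases "n = 0") auto
  have i1: "i div n < m" "j div n < m" using i j by (auto simp add: less_mult_imp_div_less)
  have "(i div n = j div n \<and> i mod n = j mod n) = (i = j)"
    by (metis div_mult_mod_eq)
  then show "kron (1\<^sub>m m) (1\<^sub>m n) $$ (i,j) = (1\<^sub>m (m*n) :: complex mat) $$ (i,j)"
    using i j i1 n by auto
qed auto

lemma kron_uminus_left: "kron (- A) B = - kron (A::complex mat) B"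
proof (rule eq_matI)
  fix i j assume ij: "i < dim_row (- kron A B)" "j < dim_col (- kron A B)"
  then have "i div dim_row B < dim_row A" "j div dim_col B < dim_col A"
    by (auto simp: less_mult_imp_div_less mult.commute)
  then show "kron (- A) B $$ (i,j) = (- kron A B) $$ (i,j)" using ij by simp
qed auto

lemma kron_uminus_right: "kron A (- B) = - kron (A::complex mat) B"
proof (rule eq_matI)
  fix i j assume ij: "i < dim_row (- kron A B)" "j < dim_col (- kron A B)"
  then have "dim_row B > 0" "dim_col B > 0" by (cases "dim_row B = 0"; auto; cases "dim_col B = 0"; auto)+
  then show "kron A (- B) $$ (i,j) = (- kron A B) $$ (i,j)" using ij by simp
qed auto


lemma two_cases: "i < (2::nat) \<Longrightarrow> i = 0 \<or> i = 1" by auto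

lemma sz_carrier[simp]: "sigma_z \<in> carrier_mat 2 2" "dim_row sigma_z = 2" "dim_col sigma_z = 2"
  by (auto simp: sigma_z_def mat_of_rows_list_def)
lemma sx_carrier[simp]: "sigma_x \<in> carrier_mat 2 2" "dim_row sigma_x = 2" "dim_col sigma_x = 2"
  by (auto simp: sigma_x_def mat_of_rows_list_def)

definition eps0 :: "complex mat" where "eps0 = mat_of_rows_list 2 [[0, 1], [-1, 0]]"

lemma eps0_carrier[simp]: "eps0 \<in> carrier_mat 2 2" "dim_row eps0 = 2" "dim_col eps0 = 2"
  by (auto simp: eps0_def mat_of_rows_list_def)

lemma sz_idx: "sigma_z $$ (0,0) = 1" "sigma_z $$ (0,1) = 0" "sigma_z $$ (1,0) = 0" "sigma_z $$ (1,1) = -1"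
  by (auto simp: sigma_z_def mat_of_rows_list_def)
lemma sx_idx: "sigma_x $$ (0,0) = 0" "sigma_x $$ (0,1) = 1" "sigma_x $$ (1,0) = 1" "sigma_x $$ (1,1) = 0"
  by (auto simp: sigma_x_def mat_of_rows_list_def)
lemma e0_idx: "eps0 $$ (0,0) = 0" "eps0 $$ (0,1) = 1" "eps0 $$ (1,0) = -1" "eps0 $$ (1,1) = 0"
  by (auto simp: eps0_def mat_of_rows_list_def)

lemma sum2: "(\<Sum>x<2::nat. f x) = f 0 + f 1"
  by (simp add: numeral_2_eq_2)

lemmas idx2 = sz_idx[unfolded One_nat_def] sx_idx[unfolded One_nat_def] e0_idx[unfolded One_nat_def] mult_carrier_mat[of _ 2 2 _ 2] adj_carrier_mat[OF eps0_carrier(1)]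

lemma mat2_eqI: "A \<in> carrier_mat 2 2 \<Longrightarrow> B \<in> carrier_mat 2 2 \<Longrightarrow>
   A $$ (0,0) = B $$ (0,0) \<Longrightarrow> A $$ (0,1) = B $$ (0,1) \<Longrightarrow> A $$ (1,0) = B $$ (1,0) \<Longrightarrow> A $$ (1,1) = B $$ (1,1) \<Longrightarrow> A = B"
  by (rule eq_matI) (auto dest!: two_cases)

lemma mult2_idx: "A \<in> carrier_mat 2 2 \<Longrightarrow> B \<in> carrier_mat 2 2 \<Longrightarrow> i < 2 \<Longrightarrow> j < 2 \<Longrightarrow>
  (A * B) $$ (i,j) = A $$ (i,0) * B $$ (0,j) + A $$ (i,1) * B $$ (1,j)"
  by (simp add: scalar_prod_def lessThan_atLeast0[symmetric] sum2)

lemma sz_sq: "sigma_z * sigma_z = 1\<^sub>m 2"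
  by (rule mat2_eqI) (auto simp: mult2_idx idx2 simp del: index_mult_mat(1))
lemma sx_sq: "sigma_x * sigma_x = 1\<^sub>m 2"
  by (rule mat2_eqI) (auto simp: mult2_idx idx2 simp del: index_mult_mat(1))
lemma sx_sz: "sigma_x * sigma_z = - (sigma_z * sigma_x)"
  by (rule mat2_eqI) (auto simp: mult2_idx idx2 simp del: index_mult_mat(1))
lemma e0_sz: "eps0 * sigma_z = - (sigma_z * eps0)"
  by (rule mat2_eqI) (auto simp: mult2_idx idx2 simp del: index_mult_mat(1))
lemma e0_sx: "eps0 * sigma_x = - (sigma_x * eps0)"
  by (rule mat2_eqI) (auto simp: mult2_idx idx2 simp del: index_mult_mat(1))
lemma adj_sz: "adj sigma_z = sigma_z"
  by (rule mat2_eqI) (auto simp: idx2)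
lemma adj_sx: "adj sigma_x = sigma_x"
  by (rule mat2_eqI) (auto simp: idx2)
lemma e0_unit: "eps0 * adj eps0 = 1\<^sub>m 2"
  by (rule mat2_eqI) (auto simp: mult2_idx idx2 simp del: index_mult_mat(1))


fun eps :: "nat \<Rightarrow> complex mat" where
  "eps 0 = eps0"
| "eps (Suc m) = kron (eps m) sigma_z"

definition cliff :: "nat \<Rightarrow> complex mat list \<Rightarrow> complex mat \<Rightarrow> nat \<Rightarrow> bool" where
  "cliff d F E g \<longleftrightarrow> length F = g \<and>
     (\<forall>k<g. F!k \<in> carrier_mat d d \<and> adj (F!k) = F!k \<and> F!k * F!k = 1\<^sub>m d \<and> E * F!k = - (F!k * E)) \<and>
     (\<forall>j<g. \<forall>k<g. j \<noteq> k \<longrightarrow> F!j * F!k = - (F!k * F!j)) \<and>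
     E \<in> carrier_mat d d \<and> E * adj E = 1\<^sub>m d"

lemma cliff_base: "cliff 2 (Fg 2) (eps 0) 2"
proof -
  have F: "Fg 2 = [sigma_z, sigma_x]" by (simp add: numeral_2_eq_2)
  have k: "\<And>k::nat. k < 2 \<Longrightarrow> k = 0 \<or> k = 1" by auto
  show ?thesis unfolding cliff_def F
    by (auto dest!: k simp: sz_sq sx_sq adj_sz adj_sx e0_sz e0_sx sx_sz e0_unit)
qed

lemma neg_neg_mat: "A \<in> carrier_mat n m \<Longrightarrow> - (- A) = (A :: complex mat)"
  by (rule eq_matI) auto

lemma cliff_step:
  assumes c: "cliff d F E g" and g: "g \<ge> 1"
  shows "cliff (d*2) (map (\<lambda>A. kron A sigma_z) F @ [kron (1\<^sub>m d) sigma_x]) (kron E sigma_z) (Suc g)"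
proof -
  let ?F = "map (\<lambda>A. kron A sigma_z) F @ [kron (1\<^sub>m d) sigma_x]"
  have len: "length F = g" using c by (simp add: cliff_def)
  have Fk: "\<And>k. k < g \<Longrightarrow> F!k \<in> carrier_mat d d \<and> adj (F!k) = F!k \<and> F!k * F!k = 1\<^sub>m d \<and> E * F!k = - (F!k * E)"
    using c unfolding cliff_def by blast
  have Fjk: "\<And>j k. j < g \<Longrightarrow> k < g \<Longrightarrow> j \<noteq> k \<Longrightarrow> F!j * F!k = - (F!k * F!j)"
    using c unfolding cliff_def by blast
  have E: "E \<in> carrier_mat d d" "E * adj E = 1\<^sub>m d" using c unfolding cliff_def by blast+
  have nth1: "\<And>k. k < g \<Longrightarrow> ?F ! k = kron (F!k) sigma_z" using len by (simp add: nth_append)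
  have nth2: "?F ! g = kron (1\<^sub>m d) sigma_x" using len by (simp add: nth_append)
  have one: "(1\<^sub>m (d*2) :: complex mat) = kron (1\<^sub>m d) (1\<^sub>m 2)" by (rule kron_one[symmetric])
  have P1: "?F!k \<in> carrier_mat (d*2) (d*2) \<and> adj (?F!k) = ?F!k \<and> ?F!k * ?F!k = 1\<^sub>m (d*2) \<and>
      kron E sigma_z * ?F!k = - (?F!k * kron E sigma_z)" if k: "k < Suc g" for k
  proof (cases "k < g")
    case True
    note A = Fk[OF True]
    have "kron E sigma_z * kron (F!k) sigma_z = kron (E * F!k) (sigma_z * sigma_z)"
      using A E by (intro kron_mult) auto
    also have "\<dots> = - kron (F!k * E) (sigma_z * sigma_z)" using A by (simp add: kron_uminus_left)
    also have "kron (F!k * E) (sigma_z * sigma_z) = kron (F!k) sigma_z * kron E sigma_z"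
      using A E by (intro kron_mult[symmetric]) auto
    finally have e: "kron E sigma_z * kron (F!k) sigma_z = - (kron (F!k) sigma_z * kron E sigma_z)" .
    have "kron (F!k) sigma_z * kron (F!k) sigma_z = kron (F!k * F!k) (sigma_z * sigma_z)"
      using A by (intro kron_mult) auto
    then have s: "kron (F!k) sigma_z * kron (F!k) sigma_z = 1\<^sub>m (d*2)"
      using A by (simp add: sz_sq one)
    have a: "adj (kron (F!k) sigma_z) = kron (F!k) sigma_z"
      using A by (simp add: kron_adj[of _ d d _ 2 2] adj_sz)
    have cr: "kron (F!k) sigma_z \<in> carrier_mat (d*2) (d*2)" using A by auto
    show ?thesis using nth1[OF True] e s a cr by simp
  next
    case False
    then have kg: "k = g" using k by auto
    have I: "1\<^sub>m d \<in> carrier_mat d d" by simp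
    have "kron E sigma_z * kron (1\<^sub>m d) sigma_x = kron (E * 1\<^sub>m d) (sigma_z * sigma_x)"
      using E by (intro kron_mult) auto
    also have "\<dots> = kron E (sigma_z * sigma_x)" using E by simp
    also have "\<dots> = - kron E (sigma_x * sigma_z)"
      by (simp add: sx_sz kron_uminus_right neg_neg_mat[of "kron E (sigma_z * sigma_x)" "d*2" "d*2"] ) 
    also have "kron E (sigma_x * sigma_z) = kron (1\<^sub>m d * E) (sigma_x * sigma_z)" using E by simp
    also have "\<dots> = kron (1\<^sub>m d) sigma_x * kron E sigma_z"
      using E by (intro kron_mult[symmetric]) auto
    finally have e: "kron E sigma_z * kron (1\<^sub>m d) sigma_x = - (kron (1\<^sub>m d) sigma_x * kron E sigma_z)" .
    have "kron (1\<^sub>m d) sigma_x * kron (1\<^sub>m d) sigma_x = kron (1\<^sub>m d * 1\<^sub>m d) (sigma_x * sigma_x)"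
      by (intro kron_mult) auto
    then have s: "kron (1\<^sub>m d) sigma_x * kron (1\<^sub>m d) sigma_x = 1\<^sub>m (d*2)"
      by (simp add: sx_sq one)
    have a: "adj (kron (1\<^sub>m d) sigma_x) = kron (1\<^sub>m d) sigma_x"
      by (simp add: kron_adj[of _ d d _ 2 2] adj_sx)
    have cr: "kron (1\<^sub>m d) sigma_x \<in> carrier_mat (d*2) (d*2)" by auto
    show ?thesis using nth2 kg e s a cr by simp
  qed
  have P2: "?F!j * ?F!k = - (?F!k * ?F!j)" if jk: "j < Suc g" "k < Suc g" "j \<noteq> k" for j k
  proof -
    have gen: "?F!j * ?F!k = - (?F!k * ?F!j)" if jk: "j < g" "k < Suc g" "j \<noteq> k" for j k
    proof (cases "k < g")
      case True
      note A = Fk[OF jk(1)] Fk[OF True]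
      have "kron (F!j) sigma_z * kron (F!k) sigma_z = kron (F!j * F!k) (sigma_z * sigma_z)"
        using A by (intro kron_mult) auto
      also have "\<dots> = - kron (F!k * F!j) (sigma_z * sigma_z)"
        using Fjk[OF jk(1) True jk(3)] by (simp add: kron_uminus_left)
      also have "kron (F!k * F!j) (sigma_z * sigma_z) = kron (F!k) sigma_z * kron (F!j) sigma_z"
        using A by (intro kron_mult[symmetric]) auto
      finally show ?thesis using nth1 jk True by simp
    next
      case False
      then have kg: "k = g" using jk by auto
      note A = Fk[OF jk(1)]
      have Aj: "F!j \<in> carrier_mat d d" using A by blast
      have "kron (F!j) sigma_z * kron (1\<^sub>m d) sigma_x = kron (F!j * 1\<^sub>m d) (sigma_z * sigma_x)"
        using A by (intro kron_mult) auto
      also have "\<dots> = kron (F!j) (sigma_z * sigma_x)" using Aj by simp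
      also have "\<dots> = - kron (F!j) (sigma_x * sigma_z)"
        using A by (simp add: sx_sz kron_uminus_right neg_neg_mat[of "kron (F!j) (sigma_z * sigma_x)" "d*2" "d*2"])
      also have "kron (F!j) (sigma_x * sigma_z) = kron (1\<^sub>m d * F!j) (sigma_x * sigma_z)" using Aj by simp
      also have "\<dots> = kron (1\<^sub>m d) sigma_x * kron (F!j) sigma_z"
        using A by (intro kron_mult[symmetric]) auto
      finally show ?thesis using nth1 nth2 jk kg by simp
    qed
    show ?thesis
    proof (cases "j < g")
      case True then show ?thesis using gen jk by blast
    next
      case False
      then have "k < g" using jk by auto
      then have "?F!k * ?F!j = - (?F!j * ?F!k)" using gen jk by blast
      moreover have "?F!j * ?F!k \<in> carrier_mat (d*2) (d*2)" using P1 jk by (meson mult_carrier_mat)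
      ultimately show ?thesis by (simp add: neg_neg_mat)
    qed
  qed
  have E2: "kron E sigma_z \<in> carrier_mat (d*2) (d*2)" using E by auto
  have "kron E sigma_z * adj (kron E sigma_z) = kron E sigma_z * kron (adj E) (adj sigma_z)"
    using E by (simp add: kron_adj[of _ d d _ 2 2])
  also have "\<dots> = kron (E * adj E) (sigma_z * adj sigma_z)"
    using E by (intro kron_mult) auto
  also have "\<dots> = 1\<^sub>m (d*2)" using E by (simp add: adj_sz sz_sq one)
  finally have E3: "kron E sigma_z * adj (kron E sigma_z) = 1\<^sub>m (d*2)" .
  have L: "length ?F = Suc g" using len by simp
  have A1: "\<forall>k<Suc g. ?F!k \<in> carrier_mat (d*2) (d*2) \<and> adj (?F!k) = ?F!k \<and> ?F!k * ?F!k = 1\<^sub>m (d*2) \<and>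
      kron E sigma_z * ?F!k = - (?F!k * kron E sigma_z)" by (intro allI impI P1)
  have A2: "\<forall>j<Suc g. \<forall>k<Suc g. j \<noteq> k \<longrightarrow> ?F!j * ?F!k = - (?F!k * ?F!j)" by (intro allI impI P2)
  show ?thesis unfolding cliff_def by (rule conjI[OF L conjI[OF A1 conjI[OF A2 conjI[OF E2 E3]]]])
qed

lemma cliff_Fg: "cliff (2^Suc m) (Fg (Suc (Suc m))) (eps m) (Suc (Suc m))"
proof (induction m)
  case 0 then show ?case using cliff_base by (simp add: numeral_2_eq_2)
next
  case (Suc m)
  have "cliff (2^Suc m * 2) (map (\<lambda>A. kron A sigma_z) (Fg (Suc (Suc m))) @ [kron (1\<^sub>m (2^Suc m)) sigma_x])
     (kron (eps m) sigma_z) (Suc (Suc (Suc m)))"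
    by (rule cliff_step[OF Suc]) auto
  then show ?case by (simp add: mult.commute)
qed


lemma cliffD:
  assumes "cliff d F E g"
  shows "length F = g"
    "\<And>k. k < g \<Longrightarrow> F!k \<in> carrier_mat d d"
    "\<And>k. k < g \<Longrightarrow> adj (F!k) = F!k"
    "\<And>k. k < g \<Longrightarrow> F!k * F!k = 1\<^sub>m d"
    "\<And>k. k < g \<Longrightarrow> E * F!k = - (F!k * E)"
    "\<And>j k. j < g \<Longrightarrow> k < g \<Longrightarrow> j \<noteq> k \<Longrightarrow> F!j * F!k = - (F!k * F!j)"
    "E \<in> carrier_mat d d" "E * adj E = 1\<^sub>m d"
  using assms unfolding cliff_def by blast+

lemma msum_cong: "(\<And>j. j \<in> S \<Longrightarrow> f j = h j) \<Longrightarrow> msum d f S = msum d h S"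
  unfolding msum_def by (metis (no_types, lifting) sum.cong)

lemma conj_smult: assumes "A \<in> carrier_mat d d" "B \<in> carrier_mat d d"
  shows "A * (c \<cdot>\<^sub>m B) * adj A = c \<cdot>\<^sub>m (A * B * adj A)"
proof -
  have "A * (c \<cdot>\<^sub>m B) = c \<cdot>\<^sub>m (A * B)" using assms by (rule mult_smult_distrib)
  moreover have "(c \<cdot>\<^sub>m (A * B)) * adj A = c \<cdot>\<^sub>m (A * B * adj A)"
    using assms by (intro mult_smult_assoc_mat) auto
  ultimately show ?thesis by simp
qed

lemma conj_msum: assumes A: "A \<in> carrier_mat d d" and f: "\<And>j. j \<in> S \<Longrightarrow> f j \<in> carrier_mat d d" and S: "finite S"
  shows "A * msum d f S * adj A = msum d (\<lambda>j. A * f j * adj A) S"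
proof -
  have "A * msum d f S = msum d (\<lambda>j. A * f j) S" using assms by (rule mult_msum)
  moreover have "msum d (\<lambda>j. A * f j) S * adj A = msum d (\<lambda>j. A * f j * adj A) S"
    using A f S by (intro msum_mult) auto
  ultimately show ?thesis by simp
qed

lemma conj_comp: assumes A: "A \<in> carrier_mat d d" and B: "B \<in> carrier_mat d d" and M: "M \<in> carrier_mat d d"
  shows "(A * B) * M * adj (A * B) = A * (B * M * adj B) * adj A"
proof -
  have aA: "adj A \<in> carrier_mat d d" and aB: "adj B \<in> carrier_mat d d" using A B by auto
  have "adj (A * B) = adj B * adj A" using A B by (rule adj_mult)
  then show ?thesis using A B M aA aB by (simp add: assoc_mult_mat[of _ d d _ d _ d])
qed

definition rel :: "nat \<Rightarrow> complex mat list \<Rightarrow> nat \<Rightarrow> real mat \<Rightarrow> complex mat \<Rightarrow> bool" where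
  "rel d F g U W \<longleftrightarrow> W \<in> carrier_mat d d \<and> W * adj W = 1\<^sub>m d \<and>
     (\<forall>k<g. W * F!k * adj W = msum d (\<lambda>j. complex_of_real (U $$ (j,k)) \<cdot>\<^sub>m F!j) {..<g})"

lemma rel_id: assumes c: "cliff d F E g" shows "rel d F g (1\<^sub>m g) (1\<^sub>m d)"
proof -
  have "msum d (\<lambda>j. complex_of_real (1\<^sub>m g $$ (j,k)) \<cdot>\<^sub>m F!j) {..<g} = F!k" if k: "k < g" for k
  proof (rule eq_matI)
    fix r s assume rs: "r < dim_row (F!k)" "s < dim_col (F!k)"
    have Fk: "F!k \<in> carrier_mat d d" using cliffD(2)[OF c k] .
    have Fr: "\<And>j. j < g \<Longrightarrow> r < dim_row (F!j) \<and> s < dim_col (F!j)" using cliffD(2)[OF c] rs Fk by auto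
    have "msum d (\<lambda>j. complex_of_real (1\<^sub>m g $$ (j,k)) \<cdot>\<^sub>m F!j) {..<g} $$ (r,s) =
       (\<Sum>j<g. complex_of_real (1\<^sub>m g $$ (j,k)) * F!j $$ (r,s))"
      using rs Fk Fr by simp
    also have "\<dots> = (\<Sum>j<g. if j = k then F!k $$ (r,s) else 0)"
      by (rule sum.cong) (use k in auto)
    also have "\<dots> = F!k $$ (r,s)" using k by simp
    finally show "msum d (\<lambda>j. complex_of_real (1\<^sub>m g $$ (j,k)) \<cdot>\<^sub>m F!j) {..<g} $$ (r,s) = F!k $$ (r,s)" .
  qed (use cliffD(2)[OF c that] in auto)
  moreover have "1\<^sub>m d * F!k * adj (1\<^sub>m d) = F!k" if k: "k < g" for k
    using cliffD(2)[OF c k] by simp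
  ultimately show ?thesis unfolding rel_def by auto
qed

lemma rel_comp: assumes c: "cliff d F E g" and U1: "U1 \<in> carrier_mat g g" and U2: "U2 \<in> carrier_mat g g"
  and r1: "rel d F g U1 W1" and r2: "rel d F g U2 W2"
  shows "rel d F g (U1 * U2) (W1 * W2)"
proof -
  have W1: "W1 \<in> carrier_mat d d" "W1 * adj W1 = 1\<^sub>m d" and W2: "W2 \<in> carrier_mat d d" "W2 * adj W2 = 1\<^sub>m d"
    using r1 r2 unfolding rel_def by blast+
  have T1: "\<And>k. k < g \<Longrightarrow> W1 * F!k * adj W1 = msum d (\<lambda>j. complex_of_real (U1 $$ (j,k)) \<cdot>\<^sub>m F!j) {..<g}"
    using r1 unfolding rel_def by blast
  have T2: "\<And>k. k < g \<Longrightarrow> W2 * F!k * adj W2 = msum d (\<lambda>j. complex_of_real (U2 $$ (j,k)) \<cdot>\<^sub>m F!j) {..<g}"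
    using r2 unfolding rel_def by blast
  have Fc: "\<And>k. k < g \<Longrightarrow> F!k \<in> carrier_mat d d" using cliffD(2)[OF c] .
  have WW: "W1 * W2 \<in> carrier_mat d d" using W1 W2 by auto
  have "(W1 * W2) * adj (W1 * W2) = W1 * (W2 * 1\<^sub>m d * adj W2) * adj W1"
    using conj_comp[OF W1(1) W2(1), of "1\<^sub>m d"] W1 W2 by simp
  also have "\<dots> = 1\<^sub>m d" using W1 W2 by simp
  finally have U: "(W1 * W2) * adj (W1 * W2) = 1\<^sub>m d" .
  have T: "(W1 * W2) * F!k * adj (W1 * W2) = msum d (\<lambda>j. complex_of_real ((U1 * U2) $$ (j,k)) \<cdot>\<^sub>m F!j) {..<g}"
    if k: "k < g" for k
  proof -
    have "(W1 * W2) * F!k * adj (W1 * W2) = W1 * (W2 * F!k * adj W2) * adj W1"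
      using conj_comp[OF W1(1) W2(1) Fc[OF k]] .
    also have "\<dots> = W1 * msum d (\<lambda>l. complex_of_real (U2 $$ (l,k)) \<cdot>\<^sub>m F!l) {..<g} * adj W1"
      using T2[OF k] by simp
    also have "\<dots> = msum d (\<lambda>l. W1 * (complex_of_real (U2 $$ (l,k)) \<cdot>\<^sub>m F!l) * adj W1) {..<g}"
      using Fc by (intro conj_msum W1) auto
    also have "\<dots> = msum d (\<lambda>l. complex_of_real (U2 $$ (l,k)) \<cdot>\<^sub>m msum d (\<lambda>j. complex_of_real (U1 $$ (j,l)) \<cdot>\<^sub>m F!j) {..<g}) {..<g}"
      by (rule msum_cong) (simp add: conj_smult[OF W1(1) Fc] T1)
    also have "\<dots> = msum d (\<lambda>j. complex_of_real ((U1 * U2) $$ (j,k)) \<cdot>\<^sub>m F!j) {..<g}"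
    proof (rule eq_matI)
      fix r s assume rs: "r < dim_row (msum d (\<lambda>j. complex_of_real ((U1 * U2) $$ (j,k)) \<cdot>\<^sub>m F!j) {..<g})"
        "s < dim_col (msum d (\<lambda>j. complex_of_real ((U1 * U2) $$ (j,k)) \<cdot>\<^sub>m F!j) {..<g})"
      then have r: "r < d" "s < d" by auto
      have Fr: "\<And>j. j < g \<Longrightarrow> r < dim_row (F!j) \<and> s < dim_col (F!j)" using Fc r by auto
      have "msum d (\<lambda>l. complex_of_real (U2 $$ (l,k)) \<cdot>\<^sub>m msum d (\<lambda>j. complex_of_real (U1 $$ (j,l)) \<cdot>\<^sub>m F!j) {..<g}) {..<g} $$ (r,s)
          = (\<Sum>l<g. complex_of_real (U2 $$ (l,k)) * (\<Sum>j<g. complex_of_real (U1 $$ (j,l)) * F!j $$ (r,s)))"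
        using r Fr by simp
      also have "\<dots> = (\<Sum>j<g. (\<Sum>l<g. complex_of_real (U1 $$ (j,l)) * complex_of_real (U2 $$ (l,k))) * F!j $$ (r,s))"
        unfolding sum_distrib_left sum_distrib_right by (subst sum.swap) (simp add: ac_simps)
      also have "\<dots> = (\<Sum>j<g. complex_of_real ((U1 * U2) $$ (j,k)) * F!j $$ (r,s))"
      proof (rule sum.cong[OF refl])
        fix j assume "j \<in> {..<g}"
        then have "(U1 * U2) $$ (j,k) = (\<Sum>l<g. U1 $$ (j,l) * U2 $$ (l,k))"
          using U1 U2 k by (simp add: scalar_prod_def lessThan_atLeast0 del: sum.distrib)
        then show "(\<Sum>l<g. complex_of_real (U1 $$ (j,l)) * complex_of_real (U2 $$ (l,k))) * F!j $$ (r,s) =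
            complex_of_real ((U1 * U2) $$ (j,k)) * F!j $$ (r,s)" by simp
      qed
      also have "\<dots> = msum d (\<lambda>j. complex_of_real ((U1 * U2) $$ (j,k)) \<cdot>\<^sub>m F!j) {..<g} $$ (r,s)"
        using r Fr by simp
      finally show "msum d (\<lambda>l. complex_of_real (U2 $$ (l,k)) \<cdot>\<^sub>m msum d (\<lambda>j. complex_of_real (U1 $$ (j,l)) \<cdot>\<^sub>m F!j) {..<g}) {..<g} $$ (r,s)
          = msum d (\<lambda>j. complex_of_real ((U1 * U2) $$ (j,k)) \<cdot>\<^sub>m F!j) {..<g} $$ (r,s)" .
    qed auto
    finally show ?thesis .
  qed
  show ?thesis unfolding rel_def using WW U T by blast
qed


lemma msum_mult_entry: assumes f: "\<And>j. j \<in> S \<Longrightarrow> f j \<in> carrier_mat d d" and B: "B \<in> carrier_mat d d"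
  and S: "finite S" and rs: "r < d" "s < d"
  shows "(msum d (\<lambda>j. c j \<cdot>\<^sub>m f j) S * B) $$ (r,s) = (\<Sum>j\<in>S. c j * (f j * B) $$ (r,s))"
proof -
  have "msum d (\<lambda>j. c j \<cdot>\<^sub>m f j) S * B = msum d (\<lambda>j. (c j \<cdot>\<^sub>m f j) * B) S"
    using f B S by (intro msum_mult) auto
  also have "\<dots> = msum d (\<lambda>j. c j \<cdot>\<^sub>m (f j * B)) S"
  proof (rule msum_cong)
    fix j assume "j \<in> S" then have "f j \<in> carrier_mat d d" using f by auto
    then show "(c j \<cdot>\<^sub>m f j) * B = c j \<cdot>\<^sub>m (f j * B)" using B by (rule mult_smult_assoc_mat)
  qed
  finally have "(msum d (\<lambda>j. c j \<cdot>\<^sub>m f j) S * B) $$ (r,s) = (\<Sum>l\<in>S. (c l \<cdot>\<^sub>m (f l * B)) $$ (r,s))" using rs by simp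
  also have "\<dots> = (\<Sum>j\<in>S. c j * (f j * B) $$ (r,s))"
  proof (rule sum.cong[OF refl])
    fix j assume "j \<in> S" then have "f j \<in> carrier_mat d d" using f by auto
    then show "(c j \<cdot>\<^sub>m (f j * B)) $$ (r,s) = c j * (f j * B) $$ (r,s)" using rs B by simp
  qed
  finally show ?thesis .
qed

lemma mult_msum_entry: assumes f: "\<And>j. j \<in> S \<Longrightarrow> f j \<in> carrier_mat d d" and B: "B \<in> carrier_mat d d"
  and S: "finite S" and rs: "r < d" "s < d"
  shows "(B * msum d (\<lambda>j. c j \<cdot>\<^sub>m f j) S) $$ (r,s) = (\<Sum>j\<in>S. c j * (B * f j) $$ (r,s))"
proof -
  have "B * msum d (\<lambda>j. c j \<cdot>\<^sub>m f j) S = msum d (\<lambda>j. B * (c j \<cdot>\<^sub>m f j)) S"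
    using f B S by (intro mult_msum) auto
  also have "\<dots> = msum d (\<lambda>j. c j \<cdot>\<^sub>m (B * f j)) S"
  proof (rule msum_cong)
    fix j assume "j \<in> S" then have "f j \<in> carrier_mat d d" using f by auto
    then show "B * (c j \<cdot>\<^sub>m f j) = c j \<cdot>\<^sub>m (B * f j)" using B by (intro mult_smult_distrib)
  qed
  finally have "(B * msum d (\<lambda>j. c j \<cdot>\<^sub>m f j) S) $$ (r,s) = (\<Sum>l\<in>S. (c l \<cdot>\<^sub>m (B * f l)) $$ (r,s))" using rs by simp
  also have "\<dots> = (\<Sum>j\<in>S. c j * (B * f j) $$ (r,s))"
  proof (rule sum.cong[OF refl])
    fix j assume "j \<in> S" then have "f j \<in> carrier_mat d d" using f by auto
    then show "(c j \<cdot>\<^sub>m (B * f j)) $$ (r,s) = c j * (B * f j) $$ (r,s)" using rs B by simp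
  qed
  finally show ?thesis .
qed

lemma rel_refl: assumes c: "cliff d F E g" and v: "(\<Sum>j<g. (v j)^2) = 1"
  shows "rel d F g (mat g g (\<lambda>(i,j). (if i = j then 1 else 0) - 2 * v i * v j))
           (E * msum d (\<lambda>j. complex_of_real (v j) \<cdot>\<^sub>m F!j) {..<g})"
proof -
  define Fv where "Fv = msum d (\<lambda>j. complex_of_real (v j) \<cdot>\<^sub>m F!j) {..<g}"
  have Fc: "\<And>k. k < g \<Longrightarrow> F!k \<in> carrier_mat d d" using cliffD(2)[OF c] .
  have Fvc: "Fv \<in> carrier_mat d d" unfolding Fv_def by simp
  have Ec: "E \<in> carrier_mat d d" "E * adj E = 1\<^sub>m d" using cliffD(7,8)[OF c] .
  have aF: "adj Fv = Fv"
  proof (rule eq_matI)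
    fix r s assume rs: "r < dim_row Fv" "s < dim_col Fv"
    then have r: "r < d" "s < d" using Fvc by auto
    have Fr: "\<And>j. j < g \<Longrightarrow> s < dim_row (F!j) \<and> r < dim_col (F!j)" using Fc r by auto
    have "adj Fv $$ (r,s) = cnj (\<Sum>j<g. complex_of_real (v j) * F!j $$ (s,r))"
      using r Fc Fr unfolding Fv_def by simp
    also have "\<dots> = (\<Sum>j<g. complex_of_real (v j) * cnj (F!j $$ (s,r)))" by simp
    also have "\<dots> = (\<Sum>j<g. complex_of_real (v j) * F!j $$ (r,s))"
    proof (rule sum.cong[OF refl])
      fix j assume j: "j \<in> {..<g}"
      have "F!j \<in> carrier_mat d d" using Fc j by simp
      then have "cnj (F!j $$ (s,r)) = adj (F!j) $$ (r,s)" using r by simp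
      also have "\<dots> = F!j $$ (r,s)" using cliffD(3)[OF c] j by simp
      finally show "complex_of_real (v j) * cnj (F!j $$ (s,r)) = complex_of_real (v j) * F!j $$ (r,s)" by simp
    qed
    also have "\<dots> = Fv $$ (r,s)" using r Fc Fc[THEN carrier_matD(1)] Fc[THEN carrier_matD(2)] unfolding Fv_def by simp
    finally show "adj Fv $$ (r,s) = Fv $$ (r,s)" .
  qed (use Fvc in auto)
  have anti: "(Fv * F!k) $$ (r,s) + (F!k * Fv) $$ (r,s) = 2 * complex_of_real (v k) * (if r = s then 1 else 0)"
    if k: "k < g" and r: "r < d" "s < d" for k r s
  proof -
    have "(Fv * F!k) $$ (r,s) = (\<Sum>j<g. complex_of_real (v j) * (F!j * F!k) $$ (r,s))"
      unfolding Fv_def using Fc k r by (intro msum_mult_entry) auto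
    moreover have "(F!k * Fv) $$ (r,s) = (\<Sum>j<g. complex_of_real (v j) * (F!k * F!j) $$ (r,s))"
      unfolding Fv_def using Fc k r by (intro mult_msum_entry) auto
    ultimately have "(Fv * F!k) $$ (r,s) + (F!k * Fv) $$ (r,s) =
       (\<Sum>j<g. complex_of_real (v j) * ((F!j * F!k) $$ (r,s) + (F!k * F!j) $$ (r,s)))"
      by (simp add: sum.distrib algebra_simps)
    also have "\<dots> = (\<Sum>j<g. if j = k then 2 * complex_of_real (v k) * (if r = s then 1 else 0) else 0)"
    proof (rule sum.cong[OF refl])
      fix j assume j: "j \<in> {..<g}"
      show "complex_of_real (v j) * ((F!j * F!k) $$ (r,s) + (F!k * F!j) $$ (r,s)) =
        (if j = k then 2 * complex_of_real (v k) * (if r = s then 1 else 0) else 0)"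
      proof (cases "j = k")
        case True then show ?thesis using cliffD(4)[OF c k] r by simp
      next
        case False
        have "F!j * F!k = - (F!k * F!j)" using cliffD(6)[OF c _ k False] j by simp
        moreover have "F!k \<in> carrier_mat d d" "F!j \<in> carrier_mat d d" using Fc j k by auto
        ultimately show ?thesis using False r by simp
      qed
    qed
    also have "\<dots> = 2 * complex_of_real (v k) * (if r = s then 1 else 0)" using k by simp
    finally show ?thesis .
  qed
  have sq: "Fv * Fv = 1\<^sub>m d"
  proof (rule eq_matI)
    fix r s assume rs: "r < dim_row (1\<^sub>m d :: complex mat)" "s < dim_col (1\<^sub>m d :: complex mat)"
    then have r: "r < d" "s < d" by auto
    have "(Fv * Fv) $$ (r,s) = (\<Sum>j<g. complex_of_real (v j) * (F!j * Fv) $$ (r,s))"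
      using Fc Fvc r by (subst (1) Fv_def, intro msum_mult_entry) auto
    also have "\<dots> = (\<Sum>j<g. complex_of_real (v j) * (2 * complex_of_real (v j) * (if r = s then 1 else 0)
        - (Fv * F!j) $$ (r,s)))"
    proof (rule sum.cong[OF refl])
      fix j assume "j \<in> {..<g}" then have j: "j < g" by simp
      have "(F!j * Fv) $$ (r,s) = 2 * complex_of_real (v j) * (if r = s then 1 else 0) - (Fv * F!j) $$ (r,s)"
        using anti[OF j r] by (metis add_diff_cancel_left')
      then show "complex_of_real (v j) * (F!j * Fv) $$ (r,s) = complex_of_real (v j) * (2 * complex_of_real (v j) * (if r = s then 1 else 0)
        - (Fv * F!j) $$ (r,s))" by simp
    qed
    also have "\<dots> = 2 * (\<Sum>j<g. complex_of_real ((v j)^2)) * (if r = s then 1 else 0)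
        - (\<Sum>j<g. complex_of_real (v j) * (Fv * F!j) $$ (r,s))"
      by (simp add: sum_subtractf right_diff_distrib sum_distrib_left sum_distrib_right power2_eq_square algebra_simps)
    also have "(\<Sum>j<g. complex_of_real ((v j)^2)) = 1"
      using v by (metis of_real_1 of_real_sum)
    also have "(\<Sum>j<g. complex_of_real (v j) * (Fv * F!j) $$ (r,s)) = (Fv * Fv) $$ (r,s)"
      using Fc Fvc r by (subst (3) Fv_def, intro mult_msum_entry[symmetric]) auto
    finally have "(Fv * Fv) $$ (r,s) = 2 * (if r = s then 1 else 0) - (Fv * Fv) $$ (r,s)" by simp
    then show "(Fv * Fv) $$ (r,s) = (1\<^sub>m d :: complex mat) $$ (r,s)" using r by auto
  qed (use Fvc in auto)
  define W where "W = E * Fv"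
  have Wc: "W \<in> carrier_mat d d" unfolding W_def using Ec Fvc by auto
  have WW: "W * adj W = 1\<^sub>m d"
  proof -
    have "W * adj W = E * (Fv * 1\<^sub>m d * adj Fv) * adj E"
      unfolding W_def using conj_comp[OF Ec(1) Fvc, of "1\<^sub>m d"] Ec Fvc by simp
    also have "\<dots> = 1\<^sub>m d" using aF sq Fvc Ec by simp
    finally show ?thesis .
  qed
  have EFE: "E * F!j * adj E = - F!j" if j: "j < g" for j
  proof -
    have "E * F!j * adj E = - (F!j * E) * adj E" using cliffD(5)[OF c j] by simp
    also have "\<dots> = - (F!j * (E * adj E))" using assoc_mult_mat[OF Fc[OF j] Ec(1) adj_carrier_mat[OF Ec(1)]] by simp
    also have "\<dots> = - F!j" using Fc[OF j] Ec by simp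
    finally show ?thesis .
  qed
  have T: "W * F!k * adj W = msum d (\<lambda>j. complex_of_real ((mat g g (\<lambda>(i,j). (if i = j then 1 else 0) - 2 * v i * v j)) $$ (j,k)) \<cdot>\<^sub>m F!j) {..<g}"
    if k: "k < g" for k
  proof -
    define M where "M = msum d (\<lambda>j. complex_of_real (2 * v k * v j - (if j = k then 1 else 0)) \<cdot>\<^sub>m F!j) {..<g}"
    have e1: "Fv * F!k = 2 * complex_of_real (v k) \<cdot>\<^sub>m 1\<^sub>m d - F!k * Fv"
    proof (rule eq_matI)
      fix r s assume "r < dim_row (2 * complex_of_real (v k) \<cdot>\<^sub>m 1\<^sub>m d - F!k * Fv)"
        "s < dim_col (2 * complex_of_real (v k) \<cdot>\<^sub>m 1\<^sub>m d - F!k * Fv)"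
      then have r: "r < d" "s < d" using Fc[OF k] Fvc by auto
      show "(Fv * F!k) $$ (r,s) = (2 * complex_of_real (v k) \<cdot>\<^sub>m 1\<^sub>m d - F!k * Fv) $$ (r,s)"
        using anti[OF k r] r Fc[OF k] Fvc by (simp add: eq_diff_eq)
    qed (use Fc[OF k] Fvc in auto)
    have "Fv * F!k * adj Fv = (2 * complex_of_real (v k) \<cdot>\<^sub>m 1\<^sub>m d - F!k * Fv) * Fv"
      using aF e1 by simp
    also have "\<dots> = (2 * complex_of_real (v k) \<cdot>\<^sub>m 1\<^sub>m d) * Fv - (F!k * Fv) * Fv"
      using Fc[OF k] Fvc by (intro minus_mult_distrib_mat) auto
    also have "\<dots> = 2 * complex_of_real (v k) \<cdot>\<^sub>m Fv - F!k"
      using Fc[OF k] Fvc sq by (simp add: mult_smult_assoc_mat[of _ d d])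
    also have "\<dots> = M"
    proof (rule eq_matI)
      fix r s assume "r < dim_row M" "s < dim_col M"
      then have r: "r < d" "s < d" unfolding M_def by auto
      have Fr: "\<And>j. j < g \<Longrightarrow> r < dim_row (F!j) \<and> s < dim_col (F!j)" using Fc r by auto
      have "(2 * complex_of_real (v k) \<cdot>\<^sub>m Fv - F!k) $$ (r,s) =
          2 * complex_of_real (v k) * (\<Sum>j<g. complex_of_real (v j) * F!j $$ (r,s)) - F!k $$ (r,s)"
        using r Fc[OF k] Fvc Fr unfolding Fv_def by simp
      also have "\<dots> = (\<Sum>j<g. complex_of_real (2 * v k * v j) * F!j $$ (r,s)) - (\<Sum>j<g. (if j = k then F!k $$ (r,s) else 0))"
        using k by (simp add: sum_distrib_left algebra_simps)
      also have "\<dots> = (\<Sum>j<g. complex_of_real (2 * v k * v j - (if j = k then 1 else 0)) * F!j $$ (r,s))"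
        unfolding sum_subtractf[symmetric] by (rule sum.cong[OF refl]) (auto simp: algebra_simps)
      also have "\<dots> = M $$ (r,s)" unfolding M_def using r Fr by simp
      finally show "(2 * complex_of_real (v k) \<cdot>\<^sub>m Fv - F!k) $$ (r,s) = M $$ (r,s)" .
    qed (use Fc[OF k] Fvc in \<open>auto simp: M_def\<close>)
    finally have FkF: "Fv * F!k * adj Fv = M" .
    have "W * F!k * adj W = E * M * adj E"
      unfolding W_def using conj_comp[OF Ec(1) Fvc Fc[OF k]] FkF by simp
    also have "\<dots> = msum d (\<lambda>j. E * (complex_of_real (2 * v k * v j - (if j = k then 1 else 0)) \<cdot>\<^sub>m F!j) * adj E) {..<g}"
      unfolding M_def using Fc by (intro conj_msum Ec) auto
    also have "\<dots> = msum d (\<lambda>j. complex_of_real (2 * v k * v j - (if j = k then 1 else 0)) \<cdot>\<^sub>m (- F!j)) {..<g}"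
      by (rule msum_cong) (simp add: conj_smult[OF Ec(1) Fc] EFE)
    also have "\<dots> = msum d (\<lambda>j. complex_of_real ((mat g g (\<lambda>(i,j). (if i = j then 1 else 0) - 2 * v i * v j)) $$ (j,k)) \<cdot>\<^sub>m F!j) {..<g}"
    proof (rule msum_cong)
      fix j assume j: "j \<in> {..<g}"
      show "complex_of_real (2 * v k * v j - (if j = k then 1 else 0)) \<cdot>\<^sub>m (- F!j) =
        complex_of_real ((mat g g (\<lambda>(i,j). (if i = j then 1 else 0) - 2 * v i * v j)) $$ (j,k)) \<cdot>\<^sub>m F!j"
        by (rule eq_matI) (use j k in \<open>auto simp: algebra_simps\<close>)
    qed
    finally show ?thesis .
  qed
  show ?thesis unfolding rel_def Fv_def[symmetric] W_def[symmetric] using Wc WW T by blast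
qed


definition Hmat :: "nat \<Rightarrow> (nat \<Rightarrow> real) \<Rightarrow> real mat" where
  "Hmat g v = mat g g (\<lambda>(i,j). (if i = j then 1 else 0) - 2 * v i * v j)"

lemma Hmat_carrier[simp]: "Hmat g v \<in> carrier_mat g g" "dim_row (Hmat g v) = g" "dim_col (Hmat g v) = g"
  by (auto simp: Hmat_def)

lemma Hmat_idx[simp]: "i < g \<Longrightarrow> j < g \<Longrightarrow> Hmat g v $$ (i,j) = (if i = j then 1 else 0) - 2 * v i * v j"
  by (simp add: Hmat_def)

lemma Hmat_sq: assumes v: "(\<Sum>j<g. (v j)^2) = 1" shows "Hmat g v * Hmat g v = 1\<^sub>m g"
proof (rule eq_matI)
  fix a b assume ab: "a < dim_row (1\<^sub>m g :: real mat)" "b < dim_col (1\<^sub>m g :: real mat)"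
  then have a: "a < g" "b < g" by auto
  have "(Hmat g v * Hmat g v) $$ (a,b) = (\<Sum>l<g. ((if a = l then 1 else 0) - 2 * v a * v l) * ((if l = b then 1 else 0) - 2 * v l * v b))"
    using a by (simp add: scalar_prod_def lessThan_atLeast0 del: sum.distrib)
  also have "\<dots> = (\<Sum>l<g. (if a = l then (if l = b then 1 else 0) else 0)) - 2 * v b * (\<Sum>l<g. (if a = l then v l else 0))
      - 2 * v a * (\<Sum>l<g. (if l = b then v l else 0)) + 4 * v a * v b * (\<Sum>l<g. (v l)^2)"
  proof -
    have pt: "((if a = l then 1 else 0) - 2 * v a * v l) * ((if l = b then 1 else 0) - 2 * v l * v b) =
      (if a = l then (if l = b then 1 else 0) else 0) - 2 * v b * (if a = l then v l else 0)
      - 2 * v a * (if l = b then v l else 0) + 4 * v a * v b * (v l)^2" for l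
      by (auto simp: algebra_simps power2_eq_square)
    show ?thesis unfolding pt by (simp add: sum.distrib sum_subtractf sum_distrib_left del: sum.delta sum.delta')
  qed
  also have "\<dots> = (if a = b then 1 else 0)" using a v by simp
  finally show "(Hmat g v * Hmat g v) $$ (a,b) = (1\<^sub>m g :: real mat) $$ (a,b)" using a by simp
qed auto

lemma Hmat_transpose: "transpose_mat (Hmat g v) = Hmat g v"
  by (rule eq_matI) auto

lemma orth_entry: assumes O: "real_orthogonal g U" and ab: "a < g" "b < g"
  shows "(\<Sum>i<g. U $$ (i,a) * U $$ (i,b)) = (if a = b then 1 else 0)"
proof -
  have Uc: "U \<in> carrier_mat g g" and T: "transpose_mat U * U = 1\<^sub>m g" using O by (auto simp: real_orthogonal_def)
  have "(transpose_mat U * U) $$ (a,b) = (\<Sum>i<g. U $$ (i,a) * U $$ (i,b))"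
    using Uc ab by (simp add: scalar_prod_def lessThan_atLeast0 del: sum.distrib)
  then show ?thesis using T ab by simp
qed

lemma house_step:
  assumes O: "real_orthogonal g U" and k: "k < g"
  and fx: "\<forall>i j. Suc k \<le> j \<longrightarrow> j < g \<longrightarrow> i < g \<longrightarrow> U $$ (i,j) = (if i = j then 1 else 0)"
  and ne: "\<not> (\<forall>i<g. U $$ (i,k) = (if i = k then 1 else 0))"
  obtains v where "(\<Sum>j<g. (v j)^2) = 1" "real_orthogonal g (Hmat g v * U)"
    "\<forall>i j. k \<le> j \<longrightarrow> j < g \<longrightarrow> i < g \<longrightarrow> (Hmat g v * U) $$ (i,j) = (if i = j then 1 else 0)"
    "Hmat g v * (Hmat g v * U) = U"
proof -
  have Uc: "U \<in> carrier_mat g g" and T: "transpose_mat U * U = 1\<^sub>m g" using O by (auto simp: real_orthogonal_def)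
  define u where "u i = U $$ (i,k)" for i
  have A: "(\<Sum>i<g. (u i)^2) = 1" using orth_entry[OF O k k] by (simp add: u_def power2_eq_square)
  have B: "u j = 0" if j: "k < j" "j < g" for j
  proof -
    have "(\<Sum>i<g. U $$ (i,j) * U $$ (i,k)) = 0" using orth_entry[OF O j(2) k] j by simp
    moreover have "(\<Sum>i<g. U $$ (i,j) * U $$ (i,k)) = (\<Sum>i<g. if i = j then u i else 0)"
      by (rule sum.cong[OF refl]) (use fx j in \<open>auto simp: u_def\<close>)
    ultimately show ?thesis using j by simp
  qed
  define s where "s = (\<Sum>i<g. (u i - (if i = k then 1 else 0))^2)"
  have s_eq: "s = 2 - 2 * u k"
  proof -
    have pt: "(u i - (if i = k then 1 else 0))^2 = (u i)^2 - 2 * (if i = k then u i else 0) + (if i = k then 1 else 0)" for i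
      by (auto simp: power2_eq_square algebra_simps)
    show ?thesis unfolding s_def pt using A k by (simp add: sum.distrib sum_subtractf sum_distrib_left[symmetric] del: sum.delta sum.delta') (simp add: k)
  qed
  obtain i0 where i0: "i0 < g" "u i0 \<noteq> (if i0 = k then 1 else 0)" using ne u_def by auto
  have s_pos: "s > 0"
  proof -
    have "0 < (u i0 - (if i0 = k then 1 else 0))^2" using i0 by simp
    also have "\<dots> \<le> s" unfolding s_def by (rule member_le_sum) (use i0 in auto)
    finally show ?thesis .
  qed
  define v where "v i = (u i - (if i = k then 1 else 0)) / sqrt s" for i
  have sq: "sqrt s * sqrt s = s" using s_pos by simp
  have vsum: "(\<Sum>j<g. (v j)^2) = 1"
  proof -
    have "(\<Sum>j<g. (v j)^2) = (\<Sum>j<g. (u j - (if j = k then 1 else 0))^2) / s"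
      unfolding v_def by (simp add: power_divide sum_divide_distrib s_pos less_imp_le)
    then show ?thesis using s_pos unfolding s_def by simp
  qed
  have vu: "(\<Sum>l<g. v l * u l) = (1 - u k) / sqrt s"
  proof -
    have "(\<Sum>l<g. v l * u l) = (\<Sum>l<g. (u l)^2 - (if l = k then u l else 0)) / sqrt s"
    proof -
      have pt: "v l * u l = ((u l)^2 - (if l = k then u l else 0)) / sqrt s" for l
        unfolding v_def by (auto simp: power2_eq_square algebra_simps diff_divide_distrib)
      show ?thesis unfolding pt by (simp add: sum_divide_distrib)
    qed
    also have "\<dots> = (1 - u k) / sqrt s" using A k by (simp add: sum_subtractf)
    finally show ?thesis .
  qed
  let ?H = "Hmat g v"
  have HU: "(?H * U) $$ (i,j) = (\<Sum>l<g. ((if i = l then 1 else 0) - 2 * v i * v l) * U $$ (l,j))"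
    if "i < g" "j < g" for i j
    using that Uc by (simp add: scalar_prod_def lessThan_atLeast0 del: sum.distrib)
  have fix1: "(?H * U) $$ (i,j) = (if i = j then 1 else 0)" if ij: "k < j" "j < g" "i < g" for i j
  proof -
    have "(?H * U) $$ (i,j) = (\<Sum>l<g. if l = j then (if i = j then 1 else 0) - 2 * v i * v j else 0)"
      unfolding HU[OF ij(3,2)] by (rule sum.cong[OF refl]) (use fx ij in auto)
    also have "\<dots> = (if i = j then 1 else 0) - 2 * v i * v j" using ij by simp
    also have "v j = 0" using B[OF ij(1,2)] ij unfolding v_def by simp
    finally show ?thesis by simp
  qed
  have fix2: "(?H * U) $$ (i,k) = (if i = k then 1 else 0)" if i: "i < g" for i
  proof -
    have "(?H * U) $$ (i,k) = (\<Sum>l<g. (if i = l then u l else 0) - 2 * v i * (v l * u l))"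
      unfolding HU[OF i k] by (rule sum.cong[OF refl]) (auto simp: u_def algebra_simps)
    also have "\<dots> = u i - 2 * v i * ((1 - u k) / sqrt s)"
      using i by (simp add: sum_subtractf sum_distrib_left[symmetric] vu)
    also have "\<dots> = u i - (u i - (if i = k then 1 else 0)) * (2 - 2 * u k) / s"
      unfolding v_def using s_pos by (simp add: field_simps sq)
    also have "\<dots> = (if i = k then 1 else 0)" using s_eq s_pos by simp
    finally show ?thesis .
  qed
  have HH: "?H * ?H = 1\<^sub>m g" using Hmat_sq[OF vsum] .
  have HHU: "?H * (?H * U) = U"
    using assoc_mult_mat[of ?H g g ?H g U g, symmetric] Uc HH by simp
  have "transpose_mat (?H * U) * (?H * U) = (transpose_mat U * ?H) * (?H * U)"
    using transpose_mult[of ?H g g U g] Uc by (simp add: Hmat_transpose)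
  also have "\<dots> = transpose_mat U * (?H * (?H * U))"
    using assoc_mult_mat[of "transpose_mat U" g g ?H g "?H * U" g] Uc mult_carrier_mat[OF Hmat_carrier(1) Uc] by simp
  also have "\<dots> = 1\<^sub>m g" using HHU T by simp
  finally have "real_orthogonal g (?H * U)" unfolding real_orthogonal_def using Uc by auto
  moreover have "\<forall>i j. k \<le> j \<longrightarrow> j < g \<longrightarrow> i < g \<longrightarrow> (?H * U) $$ (i,j) = (if i = j then 1 else 0)"
    using fix1 fix2 by (metis le_neq_implies_less)
  ultimately show ?thesis using that vsum HHU by blast
qed


lemma decomp: assumes c: "cliff d F E g"
  shows "k \<le> g \<Longrightarrow> real_orthogonal g U \<Longrightarrow>
    \<forall>i j. k \<le> j \<longrightarrow> j < g \<longrightarrow> i < g \<longrightarrow> U $$ (i,j) = (if i = j then 1 else 0) \<Longrightarrow> \<exists>W. rel d F g U W"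
proof (induction k arbitrary: U)
  case 0
  have Uc: "U \<in> carrier_mat g g" using 0 by (simp add: real_orthogonal_def)
  have "U = 1\<^sub>m g"
    by (rule eq_matI) (use 0 Uc in auto)
  then show ?case using rel_id[OF c] by blast
next
  case (Suc k)
  have k: "k < g" using Suc by simp
  have Uc: "U \<in> carrier_mat g g" using Suc by (simp add: real_orthogonal_def)
  show ?case
  proof (cases "\<forall>i<g. U $$ (i,k) = (if i = k then 1 else 0)")
    case True
    have "\<forall>i j. k \<le> j \<longrightarrow> j < g \<longrightarrow> i < g \<longrightarrow> U $$ (i,j) = (if i = j then 1 else 0)"
    proof (intro allI impI)
      fix i j assume ij: "k \<le> j" "j < g" "i < g"
      show "U $$ (i,j) = (if i = j then 1 else 0)"
      proof (cases "j = k")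
        case True then show ?thesis using \<open>\<forall>i<g. U $$ (i,k) = (if i = k then 1 else 0)\<close> ij by simp
      next
        case False then show ?thesis using Suc.prems(3) ij by auto
      qed
    qed
    then show ?thesis using Suc.IH[of U] Suc.prems k by simp
  next
    case False
    obtain v where v: "(\<Sum>j<g. (v j)^2) = 1" "real_orthogonal g (Hmat g v * U)"
      "\<forall>i j. k \<le> j \<longrightarrow> j < g \<longrightarrow> i < g \<longrightarrow> (Hmat g v * U) $$ (i,j) = (if i = j then 1 else 0)"
      "Hmat g v * (Hmat g v * U) = U"
      using house_step[OF Suc.prems(2) k Suc.prems(3) False] by blast
    obtain W' where W': "rel d F g (Hmat g v * U) W'" using Suc.IH[OF _ v(2) v(3)] k by auto
    have WH: "rel d F g (Hmat g v) (E * msum d (\<lambda>j. complex_of_real (v j) \<cdot>\<^sub>m F!j) {..<g})"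
      using rel_refl[OF c v(1)] unfolding Hmat_def .
    have "rel d F g (Hmat g v * (Hmat g v * U)) (E * msum d (\<lambda>j. complex_of_real (v j) \<cdot>\<^sub>m F!j) {..<g} * W')"
      by (rule rel_comp[OF c _ _ WH W']) (use Uc in auto)
    from this[unfolded v(4)] show ?thesis by (rule exI)
  qed
qed

lemma sum_swap4: "(\<Sum>i\<in>A. \<Sum>j\<in>B. \<Sum>a\<in>C. \<Sum>b\<in>D. f i j a b) = (\<Sum>a\<in>C. \<Sum>b\<in>D. \<Sum>i\<in>A. \<Sum>j\<in>B. f i j a b)"
proof -
  have "(\<Sum>i\<in>A. \<Sum>j\<in>B. \<Sum>a\<in>C. \<Sum>b\<in>D. f i j a b) = (\<Sum>i\<in>A. \<Sum>a\<in>C. \<Sum>j\<in>B. \<Sum>b\<in>D. f i j a b)"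
    by (rule sum.cong[OF refl], rule sum.swap)
  also have "\<dots> = (\<Sum>i\<in>A. \<Sum>a\<in>C. \<Sum>b\<in>D. \<Sum>j\<in>B. f i j a b)"
    by (rule sum.cong[OF refl], rule sum.cong[OF refl], rule sum.swap)
  also have "\<dots> = (\<Sum>a\<in>C. \<Sum>i\<in>A. \<Sum>b\<in>D. \<Sum>j\<in>B. f i j a b)"
    by (rule sum.swap)
  also have "\<dots> = (\<Sum>a\<in>C. \<Sum>b\<in>D. \<Sum>i\<in>A. \<Sum>j\<in>B. f i j a b)"
    by (rule sum.cong[OF refl], rule sum.swap)
  finally show ?thesis .
qed

lemma sa_adj: "self_adjoint n M \<longleftrightarrow> M \<in> carrier_mat n n \<and> adj M = M"
proof
  assume "self_adjoint n M"
  then have M: "M \<in> carrier_mat n n" and e: "\<And>i j. i < n \<Longrightarrow> j < n \<Longrightarrow> M $$ (i,j) = cnj (M $$ (j,i))"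
    unfolding self_adjoint_def by blast+
  have "adj M = M"
  proof (rule eq_matI)
    fix i j assume ij: "i < dim_row M" "j < dim_col M"
    then have "i < n" "j < n" using M by auto
    then show "adj M $$ (i,j) = M $$ (i,j)" using M e[of i j] by simp
  qed (use M in auto)
  then show "M \<in> carrier_mat n n \<and> adj M = M" using M by simp
next
  assume a: "M \<in> carrier_mat n n \<and> adj M = M"
  have "M $$ (i,j) = cnj (M $$ (j,i))" if "i < n" "j < n" for i j
  proof -
    have aM: "adj M = M" using a by blast
    have "M $$ (i,j) = adj M $$ (i,j)" by (simp only: aM)
    also have "\<dots> = cnj (M $$ (j,i))" by (rule index_adj) (use a that in auto)
    finally show ?thesis .
  qed
  then show "self_adjoint n M" unfolding self_adjoint_def using a by blast
qed

lemma psd_congr: assumes P: "psd N M" and V: "V \<in> carrier_mat N N"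
  shows "psd N (V * M * adj V)"
proof -
  have M: "M \<in> carrier_mat N N" "adj M = M" using P unfolding psd_def sa_adj by auto
  have aV: "adj V \<in> carrier_mat N N" using V by auto
  have Pq: "\<And>v. v \<in> carrier_vec N \<Longrightarrow> (\<Sum>i<N. \<Sum>j<N. cnj (v $ i) * M $$ (i,j) * v $ j) \<ge> 0"
    using P unfolding psd_def by blast
  have "adj (V * M * adj V) = adj (adj V) * adj (V * M)"
    using V M aV by (intro adj_mult[of "V * M" N N "adj V" N]) auto
  also have "\<dots> = V * (adj M * adj V)" using V M by (simp add: adj_mult)
  also have "\<dots> = V * M * adj V" using V M aV by simp
  finally have sa: "self_adjoint N (V * M * adj V)" unfolding sa_adj using V M aV by auto
  have q: "(\<Sum>i<N. \<Sum>j<N. cnj (w $ i) * (V * M * adj V) $$ (i,j) * w $ j) \<ge> 0"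
    if w: "w \<in> carrier_vec N" for w
  proof -
    define z where "z = vec N (\<lambda>a. \<Sum>i<N. cnj (V $$ (i,a)) * w $ i)"
    have z: "z \<in> carrier_vec N" unfolding z_def by simp
    have ent: "(V * M * adj V) $$ (i,j) = (\<Sum>a<N. \<Sum>b<N. V $$ (i,a) * M $$ (a,b) * cnj (V $$ (j,b)))"
      if "i < N" "j < N" for i j
    proof -
      have "(V * M * adj V) $$ (i,j) = (\<Sum>b<N. (V * M) $$ (i,b) * cnj (V $$ (j,b)))"
        using that V M by (simp add: scalar_prod_def lessThan_atLeast0 del: sum.distrib)
      also have "\<dots> = (\<Sum>b<N. (\<Sum>a<N. V $$ (i,a) * M $$ (a,b)) * cnj (V $$ (j,b)))"
        using that V M by (simp add: scalar_prod_def lessThan_atLeast0 del: sum.distrib)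
      also have "\<dots> = (\<Sum>b<N. \<Sum>a<N. V $$ (i,a) * M $$ (a,b) * cnj (V $$ (j,b)))"
        by (simp add: sum_distrib_right)
      also have "\<dots> = (\<Sum>a<N. \<Sum>b<N. V $$ (i,a) * M $$ (a,b) * cnj (V $$ (j,b)))"
        by (rule sum.swap)
      finally show ?thesis .
    qed
    have "(\<Sum>i<N. \<Sum>j<N. cnj (w $ i) * (V * M * adj V) $$ (i,j) * w $ j) =
       (\<Sum>i<N. \<Sum>j<N. \<Sum>a<N. \<Sum>b<N. (cnj (w $ i) * V $$ (i,a)) * M $$ (a,b) * (cnj (V $$ (j,b)) * w $ j))"
      by (rule sum.cong[OF refl], rule sum.cong[OF refl])
         (simp add: ent sum_distrib_left sum_distrib_right ac_simps)
    also have "\<dots> = (\<Sum>a<N. \<Sum>b<N. \<Sum>i<N. \<Sum>j<N. (cnj (w $ i) * V $$ (i,a)) * M $$ (a,b) * (cnj (V $$ (j,b)) * w $ j))"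
      by (rule sum_swap4)
    also have "\<dots> = (\<Sum>a<N. \<Sum>b<N. cnj (z $ a) * M $$ (a,b) * z $ b)"
    proof (rule sum.cong[OF refl], rule sum.cong[OF refl])
      fix a b assume ab: "a \<in> {..<N}" "b \<in> {..<N}"
      have "cnj (z $ a) = (\<Sum>i<N. cnj (w $ i) * V $$ (i,a))" using ab unfolding z_def by (simp add: ac_simps)
      moreover have "z $ b = (\<Sum>j<N. cnj (V $$ (j,b)) * w $ j)" using ab unfolding z_def by simp
      ultimately show "(\<Sum>i<N. \<Sum>j<N. (cnj (w $ i) * V $$ (i,a)) * M $$ (a,b) * (cnj (V $$ (j,b)) * w $ j)) =
          cnj (z $ a) * M $$ (a,b) * z $ b"
        by (simp add: sum_distrib_left sum_distrib_right) (rule sum.swap)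
    qed
    also have "\<dots> \<ge> 0" by (rule Pq[OF z])
    finally show ?thesis .
  qed
  show ?thesis unfolding psd_def by (intro conjI ballI sa q)
qed


lemma pencil_eq: assumes lenF: "length F = g" and Fc: "\<And>k. k < g \<Longrightarrow> F!k \<in> carrier_mat d d"
  and Xc: "\<And>k. k < g \<Longrightarrow> X!k \<in> carrier_mat n n"
  shows "pencil F X (d*n) = 1\<^sub>m (d*n) - msum (d*n) (\<lambda>k. kron (F!k) (X!k)) {..<g}"
proof (rule eq_matI)
  fix r s assume "r < dim_row (1\<^sub>m (d*n) - msum (d*n) (\<lambda>k. kron (F!k) (X!k)) {..<g})"
    "s < dim_col (1\<^sub>m (d*n) - msum (d*n) (\<lambda>k. kron (F!k) (X!k)) {..<g})"
  then have rs: "r < d*n" "s < d*n" by auto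
  show "pencil F X (d*n) $$ (r,s) = (1\<^sub>m (d*n) - msum (d*n) (\<lambda>k. kron (F!k) (X!k)) {..<g}) $$ (r,s)"
    using rs lenF by (simp add: pencil_def)
qed (auto simp: pencil_def)

lemma transfer: assumes c: "cliff d F E g" and g: "g > 0"
  and U: "U \<in> carrier_mat g g" and r: "rel d F g U W" and X: "X \<in> free_spectrahedron F"
  shows "orth_act U X \<in> free_spectrahedron F"
proof -
  have lenF: "length F = g" using cliffD(1)[OF c] .
  have Fc: "\<And>k. k < g \<Longrightarrow> F!k \<in> carrier_mat d d" using cliffD(2)[OF c] .
  have dF: "dim_row (F!0) = d" using Fc[OF g] by simp
  obtain n where n: "n > 0" and lenX': "length X = length F" and saX': "\<forall>i<length X. self_adjoint n (X!i)"
    and psdX': "psd (dim_row (F!0) * n) (pencil F X (dim_row (F!0) * n))"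
    using X unfolding free_spectrahedron_def by blast
  have lenX: "length X = g" using lenX' lenF by simp
  have saX: "\<And>i. i < g \<Longrightarrow> self_adjoint n (X!i)" using saX' lenX by simp
  have psdX: "psd (d*n) (pencil F X (d*n))" using psdX' dF by simp
  have Xc: "\<And>k. k < g \<Longrightarrow> X!k \<in> carrier_mat n n" using saX unfolding self_adjoint_def by blast
  have Xe: "\<And>k a b. k < g \<Longrightarrow> a < n \<Longrightarrow> b < n \<Longrightarrow> X!k $$ (a,b) = cnj (X!k $$ (b,a))"
    using saX unfolding self_adjoint_def by blast
  have X0: "dim_row (X!0) = n" "dim_col (X!0) = n" using Xc[OF g] by auto
  define Y where "Y = orth_act U X"
  have lenY: "length Y = g" unfolding Y_def orth_act_def using lenX by simp
  have Yk: "Y!k = mat n n (\<lambda>rc. \<Sum>l<g. complex_of_real (U $$ (k,l)) * X!l $$ rc)" if k: "k < g" for k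
    unfolding Y_def orth_act_def using k lenX X0 by simp
  have Yc: "Y!k \<in> carrier_mat n n" if k: "k < g" for k using Yk[OF k] by simp
  have saY: "self_adjoint n (Y!k)" if k: "k < g" for k
    unfolding self_adjoint_def
  proof (intro conjI allI impI)
    show "Y!k \<in> carrier_mat n n" using Yc[OF k] .
    fix a b assume ab: "a < n" "b < n"
    have "Y!k $$ (a,b) = (\<Sum>l<g. complex_of_real (U $$ (k,l)) * X!l $$ (a,b))" using Yk[OF k] ab by simp
    also have "\<dots> = (\<Sum>l<g. complex_of_real (U $$ (k,l)) * cnj (X!l $$ (b,a)))"
    proof (rule sum.cong[OF refl])
      fix l assume "l \<in> {..<g}"
      then show "complex_of_real (U $$ (k,l)) * X!l $$ (a,b) = complex_of_real (U $$ (k,l)) * cnj (X!l $$ (b,a))"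
        using Xe[of l a b] ab by simp
    qed
    also have "\<dots> = cnj (\<Sum>l<g. complex_of_real (U $$ (k,l)) * X!l $$ (b,a))" by simp
    also have "\<dots> = cnj (Y!k $$ (b,a))" using Yk[OF k] ab by simp
    finally show "Y!k $$ (a,b) = cnj (Y!k $$ (b,a))" .
  qed
  define N where "N = d * n"
  have W: "W \<in> carrier_mat d d" "W * adj W = 1\<^sub>m d" using r unfolding rel_def by blast+
  have T: "\<And>k. k < g \<Longrightarrow> W * F!k * adj W = msum d (\<lambda>j. complex_of_real (U $$ (j,k)) \<cdot>\<^sub>m F!j) {..<g}"
    using r unfolding rel_def by blast
  define V where "V = kron W (1\<^sub>m n)"
  have Vc: "V \<in> carrier_mat N N" unfolding V_def N_def using W by auto
  have aV: "adj V = kron (adj W) (1\<^sub>m n)" unfolding V_def using W by (simp add: kron_adj[of _ d d _ n n])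
  have aVc: "adj V \<in> carrier_mat N N" using Vc by auto
  have VV: "V * adj V = 1\<^sub>m N"
  proof -
    have "V * adj V = kron W (1\<^sub>m n) * kron (adj W) (1\<^sub>m n)" unfolding aV by (simp add: V_def)
    also have "\<dots> = kron (W * adj W) (1\<^sub>m n * 1\<^sub>m n)"
      using W by (intro kron_mult) auto
    also have "\<dots> = 1\<^sub>m N" unfolding N_def using W by (simp add: kron_one)
    finally show ?thesis .
  qed
  have VKV: "V * kron (F!k) (X!k) * adj V = kron (W * F!k * adj W) (X!k)" if k: "k < g" for k
  proof -
    have "V * kron (F!k) (X!k) = kron (W * F!k) (1\<^sub>m n * X!k)"
      unfolding V_def using W Fc[OF k] Xc[OF k] by (intro kron_mult) auto
    also have "\<dots> = kron (W * F!k) (X!k)" using Xc[OF k] by simp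
    finally have "V * kron (F!k) (X!k) * adj V = kron (W * F!k) (X!k) * kron (adj W) (1\<^sub>m n)"
      using aV by simp
    also have "\<dots> = kron (W * F!k * adj W) (X!k * 1\<^sub>m n)"
      using W Fc[OF k] Xc[OF k] by (intro kron_mult) auto
    also have "\<dots> = kron (W * F!k * adj W) (X!k)" using Xc[OF k] by simp
    finally show ?thesis .
  qed
  define L where "L = msum N (\<lambda>k. kron (F!k) (X!k)) {..<g}"
  have Lc: "L \<in> carrier_mat N N" unfolding L_def by simp
  have PX: "pencil F X N = 1\<^sub>m N - L"
    unfolding L_def N_def by (rule pencil_eq[OF lenF Fc Xc])
  have "V * pencil F X N * adj V = V * (1\<^sub>m N - L) * adj V" using PX by simp
  also have "V * (1\<^sub>m N - L) = V * 1\<^sub>m N - V * L"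
    using Vc Lc by (intro mult_minus_distrib_mat) auto
  also have "(V * 1\<^sub>m N - V * L) * adj V = V * 1\<^sub>m N * adj V - V * L * adj V"
    using Vc Lc aVc by (intro minus_mult_distrib_mat) auto
  also have "V * 1\<^sub>m N * adj V = 1\<^sub>m N" using Vc VV by simp
  also have "V * L * adj V = msum N (\<lambda>k. V * kron (F!k) (X!k) * adj V) {..<g}"
    unfolding L_def using Vc Fc Xc by (intro conj_msum) (auto simp: N_def)
  also have "\<dots> = msum N (\<lambda>k. kron (msum d (\<lambda>j. complex_of_real (U $$ (j,k)) \<cdot>\<^sub>m F!j) {..<g}) (X!k)) {..<g}"
    by (rule msum_cong) (simp add: VKV T)
  also have "1\<^sub>m N - \<dots> = pencil F Y N"
  proof (rule eq_matI)
    fix r s assume "r < dim_row (pencil F Y N)" "s < dim_col (pencil F Y N)"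
    then have rs: "r < N" "s < N" by (auto simp: pencil_def)
    have rd: "r div n < d" "s div n < d" using rs n unfolding N_def
      by (auto simp: less_mult_imp_div_less mult.commute)
    have rm: "r mod n < n" "s mod n < n" using n by auto
    have Fr: "\<And>j. j < g \<Longrightarrow> r div n < dim_row (F!j) \<and> s div n < dim_col (F!j)" using Fc rd by auto
    have "(\<Sum>k<g. kron (msum d (\<lambda>j. complex_of_real (U $$ (j,k)) \<cdot>\<^sub>m F!j) {..<g}) (X!k) $$ (r,s))
        = (\<Sum>k<g. (\<Sum>j<g. complex_of_real (U $$ (j,k)) * F!j $$ (r div n, s div n)) * X!k $$ (r mod n, s mod n))"
    proof (rule sum.cong[OF refl])
      fix k assume "k \<in> {..<g}" then have k: "k < g" by simp
      have "dim_row (X!k) = n" "dim_col (X!k) = n" using Xc[OF k] by auto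
      then show "kron (msum d (\<lambda>j. complex_of_real (U $$ (j,k)) \<cdot>\<^sub>m F!j) {..<g}) (X!k) $$ (r,s) =
          (\<Sum>j<g. complex_of_real (U $$ (j,k)) * F!j $$ (r div n, s div n)) * X!k $$ (r mod n, s mod n)"
        using rs rd Fr unfolding N_def by (simp add: mult.commute)
    qed
    also have "\<dots> = (\<Sum>j<g. F!j $$ (r div n, s div n) * (\<Sum>k<g. complex_of_real (U $$ (j,k)) * X!k $$ (r mod n, s mod n)))"
      unfolding sum_distrib_left sum_distrib_right by (subst sum.swap) (simp add: ac_simps)
    also have "\<dots> = (\<Sum>j<g. kron (F!j) (Y!j) $$ (r,s))"
    proof (rule sum.cong[OF refl])
      fix j assume "j \<in> {..<g}" then have j: "j < g" by simp
      have "dim_row (F!j) = d" "dim_col (F!j) = d" using Fc[OF j] by auto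
      then show "F!j $$ (r div n, s div n) * (\<Sum>k<g. complex_of_real (U $$ (j,k)) * X!k $$ (r mod n, s mod n)) =
          kron (F!j) (Y!j) $$ (r,s)"
        using rs rm Yk[OF j] unfolding N_def by (simp add: mult.commute)
    qed
    finally have e: "(\<Sum>k<g. kron (msum d (\<lambda>j. complex_of_real (U $$ (j,k)) \<cdot>\<^sub>m F!j) {..<g}) (X!k) $$ (r,s))
       = (\<Sum>j<g. kron (F!j) (Y!j) $$ (r,s))" .
    show "(1\<^sub>m N - msum N (\<lambda>k. kron (msum d (\<lambda>j. complex_of_real (U $$ (j,k)) \<cdot>\<^sub>m F!j) {..<g}) (X!k)) {..<g}) $$ (r,s)
        = pencil F Y N $$ (r,s)"
      using rs e lenF by (simp add: pencil_def)
  qed (auto simp: pencil_def)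
  finally have PY: "V * pencil F X N * adj V = pencil F Y N" .
  have "psd N (pencil F Y N)" unfolding PY[symmetric] using psdX Vc unfolding N_def by (intro psd_congr) auto
  then have "Y \<in> free_spectrahedron F"
    unfolding free_spectrahedron_def using n lenY lenF saY dF unfolding N_def by auto
  then show ?thesis unfolding Y_def .
qed



lemma part1: assumes g: "g \<ge> 2" and U: "real_orthogonal g U" and X: "X \<in> free_spectrahedron (Fg g)"
  shows "orth_act U X \<in> free_spectrahedron (Fg g)"
proof -
  obtain m where m: "g = Suc (Suc m)" using g by (metis add_2_eq_Suc le_Suc_ex)
  have c: "cliff (2^Suc m) (Fg g) (eps m) g" using cliff_Fg[of m] m by simp
  obtain W where W: "rel (2^Suc m) (Fg g) g U W" using decomp[OF c, of g U] U by auto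
  have Uc: "U \<in> carrier_mat g g" using U by (simp add: real_orthogonal_def)
  show ?thesis by (rule transfer[OF c _ Uc W X]) (use m in simp)
qed

lemma part2: assumes g: "g \<ge> 2" and X: "X \<in> free_spectrahedron (Fg g)" and s: "\<forall>i. s i = 1 \<or> s i = -1"
  shows "map (\<lambda>i. complex_of_real (s i) \<cdot>\<^sub>m (X ! i)) [0..<g] \<in> free_spectrahedron (Fg g)"
proof -
  obtain m where m: "g = Suc (Suc m)" using g by (metis add_2_eq_Suc le_Suc_ex)
  have c: "cliff (2^Suc m) (Fg g) (eps m) g" using cliff_Fg[of m] m by simp
  have lenF: "length (Fg g) = g" using cliffD(1)[OF c] .
  obtain n where n: "n > 0" and lenX': "length X = length (Fg g)" and saX': "\<forall>i<length X. self_adjoint n (X!i)"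
    using X unfolding free_spectrahedron_def by blast
  have lenX: "length X = g" using lenX' lenF by simp
  have Xc: "\<And>i. i < g \<Longrightarrow> X!i \<in> carrier_mat n n" using saX' lenX unfolding self_adjoint_def by auto
  have X0: "dim_row (X!0) = n" "dim_col (X!0) = n" using Xc[of 0] m by auto
  define U where "U = mat g g (\<lambda>(i,j). if i = j then s i else 0)"
  have ss: "s i * s i = 1" for i using s[rule_format, of i] by auto
  have Uc: "U \<in> carrier_mat g g" unfolding U_def by simp
  have "transpose_mat U * U = 1\<^sub>m g"
  proof (rule eq_matI)
    fix a b assume "a < dim_row (1\<^sub>m g :: real mat)" "b < dim_col (1\<^sub>m g :: real mat)"
    then have ab: "a < g" "b < g" by auto
    have "(transpose_mat U * U) $$ (a,b) = (\<Sum>l<g. U $$ (l,a) * U $$ (l,b))"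
      using ab Uc by (simp add: scalar_prod_def lessThan_atLeast0 del: sum.distrib)
    also have "\<dots> = (\<Sum>l<g. if l = a then (if a = b then 1 else 0) else 0)"
      by (rule sum.cong[OF refl]) (use ab ss in \<open>auto simp: U_def\<close>)
    also have "\<dots> = (1\<^sub>m g :: real mat) $$ (a,b)" using ab by simp
    finally show "(transpose_mat U * U) $$ (a,b) = (1\<^sub>m g :: real mat) $$ (a,b)" .
  qed (use Uc in auto)
  then have O: "real_orthogonal g U" unfolding real_orthogonal_def using Uc by simp
  have "orth_act U X = map (\<lambda>i. complex_of_real (s i) \<cdot>\<^sub>m (X ! i)) [0..<g]"
  proof (rule nth_equalityI)
    show "length (orth_act U X) = length (map (\<lambda>i. complex_of_real (s i) \<cdot>\<^sub>m (X ! i)) [0..<g])"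
      unfolding orth_act_def using lenX by simp
    fix i assume "i < length (orth_act U X)"
    then have i: "i < g" unfolding orth_act_def using lenX by simp
    have "orth_act U X ! i = mat n n (\<lambda>rc. \<Sum>k<g. complex_of_real (U $$ (i,k)) * X!k $$ rc)"
      unfolding orth_act_def using i lenX X0 by simp
    also have "\<dots> = complex_of_real (s i) \<cdot>\<^sub>m (X ! i)"
    proof (rule eq_matI)
      fix a b assume ab: "a < dim_row (complex_of_real (s i) \<cdot>\<^sub>m (X ! i))" "b < dim_col (complex_of_real (s i) \<cdot>\<^sub>m (X ! i))"
      then have ab': "a < n" "b < n" using Xc[OF i] by auto
      have "(\<Sum>k<g. complex_of_real (U $$ (i,k)) * X!k $$ (a,b)) = (\<Sum>k<g. if k = i then complex_of_real (s i) * X!i $$ (a,b) else 0)"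
        by (rule sum.cong[OF refl]) (use i in \<open>auto simp: U_def\<close>)
      also have "\<dots> = complex_of_real (s i) * X!i $$ (a,b)" using i by simp
      finally show "mat n n (\<lambda>rc. \<Sum>k<g. complex_of_real (U $$ (i,k)) * X!k $$ rc) $$ (a,b) = (complex_of_real (s i) \<cdot>\<^sub>m (X ! i)) $$ (a,b)"
        using ab' Xc[OF i] by simp
    qed (use Xc[OF i] in auto)
    also have "\<dots> = map (\<lambda>i. complex_of_real (s i) \<cdot>\<^sub>m (X ! i)) [0..<g] ! i" using i by simp
    finally show "orth_act U X ! i = map (\<lambda>i. complex_of_real (s i) \<cdot>\<^sub>m (X ! i)) [0..<g] ! i" .
  qed
  then show ?thesis using part1[OF g O X] by simp
qed

theorem mainTheorem4:
  fixes g :: nat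
  assumes "g \<ge> 2"
  shows "(\<forall>U X. real_orthogonal g U \<longrightarrow> X \<in> free_spectrahedron (Fg g) \<longrightarrow>
            orth_act U X \<in> free_spectrahedron (Fg g))
       \<and> (\<forall>X (s :: nat \<Rightarrow> real). X \<in> free_spectrahedron (Fg g) \<longrightarrow> (\<forall>i. s i = 1 \<or> s i = -1) \<longrightarrow>
            map (\<lambda>i. complex_of_real (s i) \<cdot>\<^sub>m (X ! i)) [0..<g] \<in> free_spectrahedron (Fg g))"
  using part1[OF assms] part2[OF assms] by blast

end
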